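(* Let $A\in\mathbb R^{d\times d}$ and $V\in\mathbb R^{k\times d}$ be nonzero matrices, $n\in\mathbb N$, and let $f^m$ be masked self-attention with parameters $(A,V)$. Let $\mathcal E^m_A\subset\overline B(0,1)^n$ be the set of sequences $(x_1,\dots,x_n)$ such that for every $i\in\{1,\dots,n\}$ the maximum $\max_{1\le j\le i}x_i^\top A^\top x_j$ is attained at a unique index $j$. Then the complement of $\mathcal E^m_A$ in $\overline B(0,1)^n$ has zero Lebesgue measure, and for every $X\in\mathcal E^m_A$ there exists $\theta:[0,+\infty)\to[0,+\infty)$ with $\theta(R)\to1$ exponentially fast as $R\to+\infty$ such that, for all $R\ge0$, $$\|D_{RX}f^m\|_2\le\theta(R)\|V\|_2\sqrt n.$$
   Context: Masked self-attention: for $X=(x_1,\dots,x_n)\in(\mathbb R^d)^n$, $f^m(X)_i=V\sum_{j=1}^iP_{ij}x_j$ with $P_{ij}=\exp(x_i^\top A^\top x_j)/\sum_{l=1}^i\exp(x_i^\top A^\top x_l)$ for $j\le i$. $\overline B(0,1)$ is the closed unit ball of $\mathbb R^d$; $RX=(Rx_1,\dots,Rx_n)$. $D_Xf^m$ is the differential at $X$, and $\|D_Xf^m\|_2$ its operator norm with respect to the Frobenius norms $\|X\|_F=(\sum_i|x_i|^2)^{1/2}$; $\|V\|_2$ is the spectral norm. *)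

theory Defs
  imports "HOL-Analysis.Analysis"
begin

text \<open>Sequences X = (x_1,...,x_n) of vectors in R^d are elements of real^'d^'n,
  where the index type 'n is a finite linearly ordered type (order-isomorphic to {1..n},
  n = CARD('n)). The norm on real^'d^'n is the Frobenius norm.\<close>

definition attn_score :: "real^'d^'d \<Rightarrow> real^'d^'n \<Rightarrow> 'n \<Rightarrow> 'n \<Rightarrow> real" where
  "attn_score A X i j = (A *v (X $ i)) \<bullet> (X $ j)"  (* = x_i^T A^T x_j *)

definition masked_P :: "real^'d^'d \<Rightarrow> real^'d^('n::{finite,linorder}) \<Rightarrow> 'n \<Rightarrow> 'n \<Rightarrow> real" where
  "masked_P A X i j =
     exp (attn_score A X i j) / (\<Sum>l\<in>{l. l \<le> i}. exp (attn_score A X i l))"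

definition masked_attention ::
  "real^'d^'d \<Rightarrow> real^'d^'k \<Rightarrow> real^'d^('n::{finite,linorder}) \<Rightarrow> real^'k^('n::{finite,linorder})" where
  "masked_attention A V X = (\<chi> i. V *v (\<Sum>j\<in>{j. j \<le> i}. masked_P A X i j *\<^sub>R (X $ j)))"

definition spectral_norm :: "real^'a^'b \<Rightarrow> real" where
  "spectral_norm M = onorm (\<lambda>x. M *v x)"

definition unit_ball_seq :: "(real^'d^'n) set" where
  "unit_ball_seq = {X. \<forall>i. X $ i \<in> cball 0 1}"

definition E_masked :: "real^'d^'d \<Rightarrow> (real^'d^('n::{finite,linorder})) set" where
  "E_masked A = {X \<in> unit_ball_seq.
     \<forall>i. \<exists>!j. j \<le> i \<and> (\<forall>l. l \<le> i \<longrightarrow> attn_score A X i l \<le> attn_score A X i j)}"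

end

theory Submission imports Defs begin

lemma D_score:
  fixes A :: "real^'d^'d" and Y :: "real^'d^'n"
  shows "((\<lambda>X. attn_score A X i j) has_derivative (\<lambda>H. (A *v H$i) \<bullet> Y$j + (A *v Y$i) \<bullet> H$j)) (at Y)"
proof -
  have n: "((\<lambda>x::real^'d^'n. x$k) has_derivative (\<lambda>x. x$k)) (at Y)" for k
    by (rule bounded_linear_imp_has_derivative[OF bounded_linear_vec_nth])
  have m: "((\<lambda>x::real^'d^'n. A *v x$i) has_derivative (\<lambda>x. A *v x$i)) (at Y)"
    by (rule bounded_linear.has_derivative[OF matrix_vector_mul_bounded_linear n])
  show ?thesis using has_derivative_inner[OF m n[of j]] by (simp add: add.commute attn_score_def)
qed

lemma bounded_linear_axis: "bounded_linear (axis i :: 'a::real_normed_vector \<Rightarrow> 'a^'n)"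
proof
  show "axis i (x + y) = axis i x + axis i y" for x y :: 'a by (auto simp add: axis_def vec_eq_iff)
  show "axis i (r *\<^sub>R x) = r *\<^sub>R axis i x" for r and x :: 'a by (simp add: axis_def vec_eq_iff)
  show "\<exists>K. \<forall>x. norm (axis i x :: 'a^'n) \<le> norm x * K"
  proof (intro exI allI)
    fix x :: 'a
    have "norm (axis i x :: 'a^'n) \<le> (\<Sum>k\<in>UNIV. norm ((axis i x :: 'a^'n)$k))"
      unfolding norm_vec_def by (rule L2_set_le_sum) simp
    also have "\<dots> = norm x" by (simp add: axis_def if_distrib cong: if_cong)
    finally show "norm (axis i x :: 'a^'n) \<le> norm x * 1" by simp
  qed
qed

lemma vec_lambda_sum_axis: "(\<chi> i. f i) = (\<Sum>i\<in>UNIV. axis i (f i))"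
  by (simp add: vec_eq_iff axis_def if_distrib)

definition dS :: "real^'d^'d \<Rightarrow> real^'d^'n \<Rightarrow> 'n \<Rightarrow> 'n \<Rightarrow> real^'d^'n \<Rightarrow> real" where
  "dS A Y i j H = (A *v H$i) \<bullet> Y$j + (A *v Y$i) \<bullet> H$j"

lemma sumexp_pos:
  fixes A :: "real^'d^'d" and Y :: "real^'d^('n::{finite,linorder})"
  shows "(\<Sum>l\<in>{l. l \<le> i}. exp (attn_score A Y i l)) > 0"
  by (rule sum_pos) auto

lemma D_P:
  fixes A :: "real^'d^'d" and Y :: "real^'d^('n::{finite,linorder})"
  shows "((\<lambda>X. masked_P A X i j) has_derivative
     (\<lambda>H. masked_P A Y i j * (dS A Y i j H - (\<Sum>l\<in>{l. l \<le> i}. masked_P A Y i l * dS A Y i l H)))) (at Y)"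
proof -
  define S where "S = (\<Sum>l\<in>{l. l \<le> i}. exp (attn_score A Y i l))"
  have Spos: "S > 0" unfolding S_def by (rule sumexp_pos)
  have e: "((\<lambda>X. exp (attn_score A X i l)) has_derivative (\<lambda>H. dS A Y i l H * exp (attn_score A Y i l))) (at Y)" for l
    using has_derivative_exp[OF D_score[of A i l Y]] unfolding dS_def .
  have s: "((\<lambda>X. \<Sum>l\<in>{l. l \<le> i}. exp (attn_score A X i l)) has_derivative 
     (\<lambda>H. \<Sum>l\<in>{l. l \<le> i}. dS A Y i l H * exp (attn_score A Y i l))) (at Y)"
    by (rule has_derivative_sum) (rule e)
  note d = has_derivative_divide[OF e[of j] s]
  have eq: "(\<lambda>H. - exp (attn_score A Y i j) * (inverse S * (\<Sum>l\<in>{l. l \<le> i}. dS A Y i l H * exp (attn_score A Y i l)) * inverse S) 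
       + dS A Y i j H * exp (attn_score A Y i j) / S) =
     (\<lambda>H. masked_P A Y i j * (dS A Y i j H - (\<Sum>l\<in>{l. l \<le> i}. masked_P A Y i l * dS A Y i l H)))"
    using Spos by (auto simp: fun_eq_iff masked_P_def S_def[symmetric] field_simps sum_divide_distrib[symmetric] sum_distrib_left mult.commute sum_negf)
  have f: "(\<lambda>X. masked_P A X i j) = (\<lambda>X. exp (attn_score A X i j) / (\<Sum>l\<in>{l. l \<le> i}. exp (attn_score A X i l)))"
    by (simp add: masked_P_def fun_eq_iff)
  show ?thesis unfolding f eq[unfolded S_def, symmetric] by (rule d) (use Spos S_def in auto)
qed


definition dP :: "real^'d^'d \<Rightarrow> real^'d^('n::{finite,linorder}) \<Rightarrow> 'n \<Rightarrow> 'n \<Rightarrow> real^'d^('n::{finite,linorder}) \<Rightarrow> real" where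
  "dP A Y i j H = masked_P A Y i j * (dS A Y i j H - (\<Sum>l\<in>{l. l \<le> i}. masked_P A Y i l * dS A Y i l H))"

lemma D_att:
  fixes A :: "real^'d^'d" and V :: "real^'d^'k" and Y :: "real^'d^('n::{finite,linorder})"
  shows "(masked_attention A V has_derivative
     (\<lambda>H. \<chi> i. V *v (\<Sum>j\<in>{j. j \<le> i}. dP A Y i j H *\<^sub>R Y$j + masked_P A Y i j *\<^sub>R H$j))) (at Y)"
proof -
  have n: "((\<lambda>x. x$k) has_derivative (\<lambda>x. x$k)) (at Y)" for k
    by (rule bounded_linear_imp_has_derivative[OF bounded_linear_vec_nth])
  have c: "((\<lambda>X. V *v (\<Sum>j\<in>{j. j \<le> i}. masked_P A X i j *\<^sub>R X$j)) has_derivative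
     (\<lambda>H. V *v (\<Sum>j\<in>{j. j \<le> i}. dP A Y i j H *\<^sub>R Y$j + masked_P A Y i j *\<^sub>R H$j))) (at Y)" for i
  proof (rule bounded_linear.has_derivative[OF matrix_vector_mul_bounded_linear])
    show "((\<lambda>X. \<Sum>j\<in>{j. j \<le> i}. masked_P A X i j *\<^sub>R X$j) has_derivative
     (\<lambda>H. \<Sum>j\<in>{j. j \<le> i}. dP A Y i j H *\<^sub>R Y$j + masked_P A Y i j *\<^sub>R H$j)) (at Y)"
    proof (rule has_derivative_sum)
      fix j
      show "((\<lambda>X. masked_P A X i j *\<^sub>R X$j) has_derivative
         (\<lambda>H. dP A Y i j H *\<^sub>R Y$j + masked_P A Y i j *\<^sub>R H$j)) (at Y)"
        using has_derivative_scaleR[OF D_P[of A i j Y] n[of j]]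
        by (simp add: dP_def add.commute)
    qed
  qed
  have ax: "((\<lambda>X. axis i (V *v (\<Sum>j\<in>{j. j \<le> i}. masked_P A X i j *\<^sub>R X$j)) :: real^'k^('n::{finite,linorder})) has_derivative
     (\<lambda>H. axis i (V *v (\<Sum>j\<in>{j. j \<le> i}. dP A Y i j H *\<^sub>R Y$j + masked_P A Y i j *\<^sub>R H$j)))) (at Y)" for i
    by (rule bounded_linear.has_derivative[OF bounded_linear_axis c])
  show ?thesis
    unfolding masked_attention_def[abs_def] vec_lambda_sum_axis
    by (rule has_derivative_sum) (rule ax)
qed


lemma P_nonneg: "0 \<le> masked_P A Y i j"
  unfolding masked_P_def by (intro divide_nonneg_nonneg) (auto intro: sum_nonneg)

lemma P_sum:
  fixes A :: "real^'d^'d" and Y :: "real^'d^('n::{finite,linorder})"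
  shows "(\<Sum>l\<in>{l. l \<le> i}. masked_P A Y i l) = 1"
  using sumexp_pos[of A Y i] unfolding masked_P_def sum_divide_distrib[symmetric] by simp

lemma P_le_exp:
  fixes A :: "real^'d^'d" and Y :: "real^'d^('n::{finite,linorder})"
  assumes "m \<le> i"
  shows "masked_P A Y i j \<le> exp (attn_score A Y i j - attn_score A Y i m)"
proof -
  have "exp (attn_score A Y i m) \<le> (\<Sum>l\<in>{l. l \<le> i}. exp (attn_score A Y i l))"
    by (rule member_le_sum) (use assms in auto)
  then show ?thesis unfolding masked_P_def exp_diff
    by (intro divide_left_mono) (auto intro: mult_pos_pos sumexp_pos)
qed

lemma P_le1:
  fixes A :: "real^'d^'d" and Y :: "real^'d^('n::{finite,linorder})"
  assumes "j \<le> i" shows "masked_P A Y i j \<le> 1"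
  using P_le_exp[OF assms, of A Y j] by simp

lemma mv_bound: "norm (V *v x) \<le> spectral_norm V * norm x"
  unfolding spectral_norm_def by (rule onorm[OF matrix_vector_mul_bounded_linear])

lemma dS_bound:
  fixes A :: "real^'d^'d" and Y :: "real^'d^('n::{finite,linorder})"
  assumes "\<And>k. norm (Y$k) \<le> B"
  shows "\<bar>dS A Y i l H\<bar> \<le> 2 * (spectral_norm A * norm H * B)"
proof -
  have hA: "0 \<le> spectral_norm A" unfolding spectral_norm_def by (rule onorm_pos_le) simp
  have B0: "0 \<le> B" using assms[of l] norm_ge_zero order_trans by blast
  have 1: "\<bar>(A *v H$i) \<bullet> Y$l\<bar> \<le> spectral_norm A * norm H * B"
  proof -
    have "\<bar>(A *v H$i) \<bullet> Y$l\<bar> \<le> norm (A *v H$i) * norm (Y$l)" by (rule Cauchy_Schwarz_ineq2)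
    also have "\<dots> \<le> (spectral_norm A * norm H) * B"
      by (intro mult_mono order_trans[OF mv_bound] mult_left_mono Finite_Cartesian_Product.norm_nth_le assms hA) (auto intro: mult_nonneg_nonneg hA)
    finally show ?thesis by simp
  qed
  have 2: "\<bar>(A *v Y$i) \<bullet> H$l\<bar> \<le> spectral_norm A * norm H * B"
  proof -
    have "\<bar>(A *v Y$i) \<bullet> H$l\<bar> \<le> norm (A *v Y$i) * norm (H$l)" by (rule Cauchy_Schwarz_ineq2)
    also have "\<dots> \<le> (spectral_norm A * B) * norm H"
      by (intro mult_mono order_trans[OF mv_bound] mult_left_mono Finite_Cartesian_Product.norm_nth_le assms hA) (auto intro: mult_nonneg_nonneg hA B0 Finite_Cartesian_Product.norm_nth_le)
    finally show ?thesis by (simp add: algebra_simps)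
  qed
  show ?thesis unfolding dS_def using 1 2 by linarith
qed

lemma dP_alt:
  fixes A :: "real^'d^'d" and Y :: "real^'d^('n::{finite,linorder})"
  shows "dP A Y i j H = (\<Sum>l\<in>{l. l \<le> i}. masked_P A Y i j * masked_P A Y i l * (dS A Y i j H - dS A Y i l H))"
proof -
  have "(\<Sum>l\<in>{l. l \<le> i}. masked_P A Y i j * masked_P A Y i l * (dS A Y i j H - dS A Y i l H))
     = masked_P A Y i j * dS A Y i j H * (\<Sum>l\<in>{l. l \<le> i}. masked_P A Y i l)
       - masked_P A Y i j * (\<Sum>l\<in>{l. l \<le> i}. masked_P A Y i l * dS A Y i l H)"
    by (simp add: sum_distrib_left sum_subtractf algebra_simps)
  then show ?thesis by (simp add: dP_def P_sum algebra_simps)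
qed

lemma dP_bound:
  fixes A :: "real^'d^'d" and Y :: "real^'d^('n::{finite,linorder})"
  assumes e: "\<And>l. l \<le> i \<Longrightarrow> l \<noteq> j \<Longrightarrow> masked_P A Y i j * masked_P A Y i l \<le> e"
    and M: "\<And>l. \<bar>dS A Y i l H\<bar> \<le> M" and e0: "0 \<le> e"
  shows "\<bar>dP A Y i j H\<bar> \<le> real CARD('n) * (e * (2 * M))"
proof -
  have M0: "0 \<le> M" using M[of i] by linarith
  have t: "\<bar>masked_P A Y i j * masked_P A Y i l * (dS A Y i j H - dS A Y i l H)\<bar> \<le> e * (2 * M)"
    if "l \<in> {l. l \<le> i}" for l
  proof (cases "l = j")
    case True then show ?thesis using e0 M0 by simp
  next
    case False
    have "\<bar>dS A Y i j H - dS A Y i l H\<bar> \<le> 2 * M" using M[of j] M[of l] by linarith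
    moreover have "\<bar>masked_P A Y i j * masked_P A Y i l\<bar> \<le> e"
      using e[of l] that False P_nonneg[of A Y i j] P_nonneg[of A Y i l] by simp
    ultimately show ?thesis unfolding abs_mult
      by (intro mult_mono) (auto simp: e0)
  qed
  have "\<bar>dP A Y i j H\<bar> \<le> (\<Sum>l\<in>{l. l \<le> i}. e * (2 * M))"
    unfolding dP_alt by (rule order_trans[OF sum_abs sum_mono]) (rule t)
  also have "\<dots> = real (card {l. l \<le> i}) * (e * (2 * M))" by simp
  also have "\<dots> \<le> real CARD('n) * (e * (2 * M))"
    by (intro mult_right_mono) (auto intro!: card_mono simp: e0 M0)
  finally show ?thesis .
qed


lemma norm_vec_le_sqrt_card:
  fixes x :: "'a::real_normed_vector^'n"
  assumes "\<And>i. norm (x$i) \<le> b"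
  shows "norm x \<le> sqrt (real CARD('n)) * b"
proof -
  have b0: "0 \<le> b" using assms[of undefined] norm_ge_zero order_trans by blast
  have "norm x \<le> L2_set (\<lambda>i. b) (UNIV::'n set)"
    unfolding norm_vec_def by (rule L2_Norm.L2_set_mono) (use assms in auto)
  then show ?thesis by (simp add: L2_set_constant b0)
qed

lemma D_bound:
  fixes A :: "real^'d^'d" and V :: "real^'d^'k" and Y H :: "real^'d^('n::{finite,linorder})"
  assumes q: "\<And>i j. j \<le> i \<Longrightarrow> \<bar>dP A Y i j H\<bar> \<le> q" and B: "\<And>k. norm (Y$k) \<le> B"
  shows "norm (\<chi> i. V *v (\<Sum>j\<in>{j. j \<le> i}. dP A Y i j H *\<^sub>R Y$j + masked_P A Y i j *\<^sub>R H$j))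
     \<le> spectral_norm V * sqrt (real CARD('n)) * norm H
        + real CARD('n) * (spectral_norm V * (real CARD('n) * (q * B)))"
proof -
  define u where "u i = V *v (\<Sum>j\<in>{j. j \<le> i}. dP A Y i j H *\<^sub>R Y$j)" for i
  define w where "w i = V *v (\<Sum>j\<in>{j. j \<le> i}. masked_P A Y i j *\<^sub>R H$j)" for i
  have hV: "0 \<le> spectral_norm V" unfolding spectral_norm_def by (rule onorm_pos_le) simp
  have B0: "0 \<le> B" using B[of undefined] norm_ge_zero order_trans by blast
  have q0: "0 \<le> q" using q[of undefined undefined] by auto
  have split: "(\<chi> i. V *v (\<Sum>j\<in>{j. j \<le> i}. dP A Y i j H *\<^sub>R Y$j + masked_P A Y i j *\<^sub>R H$j))
     = (\<chi> i. u i) + (\<chi> i. w i)"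
    by (simp add: vec_eq_iff sum.distrib matrix_vector_right_distrib u_def w_def)
  have wb: "norm (w i) \<le> spectral_norm V * norm H" for i
  proof -
    have "norm (\<Sum>j\<in>{j. j \<le> i}. masked_P A Y i j *\<^sub>R H$j) \<le> (\<Sum>j\<in>{j. j \<le> i}. masked_P A Y i j * norm H)"
      by (rule order_trans[OF norm_sum sum_mono])
         (auto simp: P_nonneg intro!: mult_left_mono Finite_Cartesian_Product.norm_nth_le)
    also have "\<dots> = norm H" by (simp add: sum_distrib_right[symmetric] P_sum)
    finally show ?thesis unfolding w_def
      by (rule order_trans[OF mv_bound mult_left_mono]) (rule hV)
  qed
  have ub: "norm (u i) \<le> spectral_norm V * (real CARD('n) * (q * B))" for i
  proof -
    have "norm (\<Sum>j\<in>{j. j \<le> i}. dP A Y i j H *\<^sub>R Y$j) \<le> (\<Sum>j\<in>{j. j \<le> i}. q * B)"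
      by (rule order_trans[OF norm_sum sum_mono])
         (auto intro!: mult_mono q B simp: q0)
    also have "\<dots> = real (card {j. j \<le> i}) * (q * B)" by simp
    also have "\<dots> \<le> real CARD('n) * (q * B)"
      by (intro mult_right_mono) (auto intro!: card_mono simp: q0 B0)
    finally show ?thesis unfolding u_def
      by (rule order_trans[OF mv_bound mult_left_mono]) (rule hV)
  qed
  have "norm (\<chi> i. u i) \<le> (\<Sum>i\<in>UNIV. norm (u i))"
    unfolding norm_vec_def by (rule order_trans[OF L2_set_le_sum]) auto
  also have "\<dots> \<le> (\<Sum>i\<in>(UNIV::'n set). spectral_norm V * (real CARD('n) * (q * B)))"
    by (rule sum_mono) (rule ub)
  finally have un: "norm (\<chi> i. u i) \<le> real CARD('n) * (spectral_norm V * (real CARD('n) * (q * B)))"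
    by simp
  have wn: "norm (\<chi> i. w i) \<le> sqrt (real CARD('n)) * (spectral_norm V * norm H)"
    by (rule norm_vec_le_sqrt_card) (simp add: wb)
  show ?thesis unfolding split
    using norm_triangle_ineq[of "(\<chi> i. u i)" "(\<chi> i. w i)"] un wn
    by (simp add: algebra_simps)
qed


lemma score_scale:
  fixes A :: "real^'d^'d" and X :: "real^'d^'n"
  shows "attn_score A (c *\<^sub>R X) i j = c\<^sup>2 * attn_score A X i j"
  by (simp add: attn_score_def matrix_vector_mult_scaleR power2_eq_square)

lemma gap:
  fixes A :: "real^'d^'d" and X :: "real^'d^('n::{finite,linorder})"
  assumes "X \<in> E_masked A"
  shows "\<exists>g>0. \<exists>m. \<forall>i. m i \<le> i \<and> (\<forall>j. j \<le> i \<longrightarrow> j \<noteq> m i \<longrightarrow> attn_score A X i j + g \<le> attn_score A X i (m i))"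
proof -
  let ?s = "attn_score A X"
  have u: "\<forall>i. \<exists>!j. j \<le> i \<and> (\<forall>l. l \<le> i \<longrightarrow> ?s i l \<le> ?s i j)"
    using assms unfolding E_masked_def by auto
  define m where "m i = (THE j. j \<le> i \<and> (\<forall>l. l \<le> i \<longrightarrow> ?s i l \<le> ?s i j))" for i
  have m: "m i \<le> i \<and> (\<forall>l. l \<le> i \<longrightarrow> ?s i l \<le> ?s i (m i))" for i
    unfolding m_def using theI'[OF u[rule_format, of i]] .
  have lt: "?s i j < ?s i (m i)" if "j \<le> i" "j \<noteq> m i" for i j
  proof -
    have le: "?s i j \<le> ?s i (m i)" using m that by blast
    have "?s i j \<noteq> ?s i (m i)"
    proof
      assume eq: "?s i j = ?s i (m i)"
      have "j \<le> i \<and> (\<forall>l. l \<le> i \<longrightarrow> ?s i l \<le> ?s i j)" using m[of i] that eq by auto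
      with u m[of i] that show False by metis
    qed
    with le show ?thesis by simp
  qed
  define T where "T = (\<lambda>(i,j). ?s i (m i) - ?s i j) ` {(i,j). j \<le> i \<and> j \<noteq> m i}"
  define g where "g = Min (insert 1 T)"
  have fT: "finite T" unfolding T_def by simp
  have g0: "g > 0" unfolding g_def using fT
    by (subst Min_gr_iff) (auto simp: T_def intro: lt)
  have "?s i j + g \<le> ?s i (m i)" if "j \<le> i" "j \<noteq> m i" for i j
  proof -
    have "g \<le> ?s i (m i) - ?s i j" unfolding g_def using fT that
      by (intro Min_le) (auto simp: T_def)
    then show ?thesis by simp
  qed
  with g0 m show ?thesis by blast
qed

lemma PP_bound:
  fixes A :: "real^'d^'d" and X :: "real^'d^('n::{finite,linorder})"
  assumes m: "m \<le> i" and gm: "\<And>j. j \<le> i \<Longrightarrow> j \<noteq> m \<Longrightarrow> attn_score A X i j + g \<le> attn_score A X i m"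
    and jl: "j \<le> i" "l \<le> i" "j \<noteq> l"
  shows "masked_P A (R *\<^sub>R X) i j * masked_P A (R *\<^sub>R X) i l \<le> exp (- g * R\<^sup>2)"
proof -
  have one: "masked_P A (R *\<^sub>R X) i k \<le> exp (- g * R\<^sup>2)" if "k \<le> i" "k \<noteq> m" for k
  proof -
    have "masked_P A (R *\<^sub>R X) i k \<le> exp (attn_score A (R *\<^sub>R X) i k - attn_score A (R *\<^sub>R X) i m)"
      by (rule P_le_exp[OF m])
    also have "\<dots> = exp (R\<^sup>2 * (attn_score A X i k - attn_score A X i m))"
      by (simp add: score_scale algebra_simps)
    also have "\<dots> \<le> exp (- g * R\<^sup>2)"
    proof -
      have "R\<^sup>2 * (attn_score A X i k - attn_score A X i m) \<le> R\<^sup>2 * (- g)"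
        using gm[OF that] by (intro mult_left_mono) auto
      then show ?thesis by (simp add: algebra_simps)
    qed
    finally show ?thesis .
  qed
  show ?thesis
  proof (cases "j = m")
    case True
    then have "l \<noteq> m" using jl by simp
    then show ?thesis using one[OF jl(2)] P_le1[OF jl(1), of A "R *\<^sub>R X"] P_nonneg[of A "R *\<^sub>R X" i l]
      by (metis dual_order.trans mult_left_le_one_le P_nonneg)
  next
    case False
    then show ?thesis using one[OF jl(1)] P_le1[OF jl(2), of A "R *\<^sub>R X"] P_nonneg[of A "R *\<^sub>R X" i j]
      by (metis dual_order.trans mult_right_le_one_le P_nonneg)
  qed
qed

lemma decay:
  fixes g R :: real
  assumes g: "g > 0" and R: "R \<ge> 2 / g"
  shows "R\<^sup>2 * exp (- g * R\<^sup>2) \<le> 4 * exp (- R)"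
proof -
  have R0: "R > 0" using g R by (smt (verit) divide_pos_pos)
  have "g * R \<ge> 2" using R g by (simp add: field_simps)
  then have "g * R\<^sup>2 \<ge> 2 * R" using R0 by (simp add: power2_eq_square mult_right_mono algebra_simps)
  then have e1: "exp (- g * R\<^sup>2) \<le> exp (- 2 * R)" by simp
  have "R / 2 \<le> exp (R / 2)" using exp_ge_add_one_self[of "R/2"] by linarith
  then have "(R/2)\<^sup>2 \<le> (exp (R/2))\<^sup>2" using R0 by (intro power_mono) auto
  also have "(exp (R/2))\<^sup>2 = exp R" by (simp add: power2_eq_square flip: exp_add)
  finally have e2: "R\<^sup>2 \<le> 4 * exp R" by (simp add: power_divide)
  have "R\<^sup>2 * exp (- g * R\<^sup>2) \<le> (4 * exp R) * exp (- 2 * R)"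
    by (intro mult_mono e1 e2) auto
  also have "\<dots> = 4 * exp (- R)" by (simp flip: exp_add)
  finally show ?thesis .
qed


lemma part2:
  fixes A :: "real^'d^'d" and V :: "real^'d^'k" and X :: "real^'d^('n::{finite,linorder})"
  assumes V: "V \<noteq> 0" and X: "X \<in> E_masked A"
  shows "\<exists>\<theta> :: real \<Rightarrow> real.
           (\<forall>R\<ge>0. \<theta> R \<ge> 0)
         \<and> (\<exists>C c. c > 0 \<and> (\<forall>\<^sub>F R in at_top. \<bar>\<theta> R - 1\<bar> \<le> C * exp (- c * R)))
         \<and> (\<forall>R\<ge>0. masked_attention A V differentiable (at (R *\<^sub>R X))
               \<and> onorm (frechet_derivative (masked_attention A V) (at (R *\<^sub>R X)))
                   \<le> \<theta> R * spectral_norm V * sqrt (real CARD('n)))"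
proof -
  obtain g m where g0: "g > 0" and m: "\<And>i. m i \<le> i"
    and gm: "\<And>i j. j \<le> i \<Longrightarrow> j \<noteq> m i \<Longrightarrow> attn_score A X i j + g \<le> attn_score A X i (m i)"
    using gap[OF X] by blast
  define n where "n = real CARD('n)"
  define a where "a = spectral_norm A"
  define v where "v = spectral_norm V"
  have n0: "n > 0" unfolding n_def by simp
  have sn0: "sqrt n > 0" using n0 by simp
  have a0: "a \<ge> 0" unfolding a_def spectral_norm_def by (rule onorm_pos_le) simp
  have v0: "v > 0" unfolding v_def spectral_norm_def
  proof (subst onorm_pos_lt[OF matrix_vector_mul_bounded_linear])
    show "\<not> (\<forall>x. V *v x = 0)" using V matrix_eq[of V 0] by auto
  qed
  define K where "K = 4 * n * n * n * a"
  have K0: "K \<ge> 0" unfolding K_def using n0 a0 by simp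
  define \<theta> where "\<theta> R = 1 + K * R\<^sup>2 * exp (- g * R\<^sup>2) / sqrt n" for R
  have th1: "\<theta> R \<ge> 1" for R unfolding \<theta>_def using K0 sn0 by simp
  have ev: "\<forall>\<^sub>F R in at_top. \<bar>\<theta> R - 1\<bar> \<le> (4 * K / sqrt n) * exp (- 1 * R)"
    unfolding eventually_at_top_linorder
  proof (intro exI allI impI)
    fix R assume R: "R \<ge> 2 / g"
    have "\<bar>\<theta> R - 1\<bar> = K * (R\<^sup>2 * exp (- g * R\<^sup>2)) / sqrt n"
      unfolding \<theta>_def using K0 sn0 by simp
    also have "\<dots> \<le> K * (4 * exp (- R)) / sqrt n"
      by (intro divide_right_mono mult_left_mono decay[OF g0 R] K0) (use sn0 in auto)
    finally show "\<bar>\<theta> R - 1\<bar> \<le> (4 * K / sqrt n) * exp (- 1 * R)" by (simp add: mult.assoc mult.left_commute)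
  qed
  have main: "masked_attention A V differentiable (at (R *\<^sub>R X))
               \<and> onorm (frechet_derivative (masked_attention A V) (at (R *\<^sub>R X)))
                   \<le> \<theta> R * spectral_norm V * sqrt (real CARD('n))" if R0: "R \<ge> 0" for R
  proof -
    define Y where "Y = R *\<^sub>R X"
    note D = D_att[of A V Y]
    have B: "norm (Y$k) \<le> R" for k
    proof -
      have "X$k \<in> cball 0 1" using X unfolding E_masked_def unit_ball_seq_def by auto
      then have "norm (X$k) \<le> 1" by simp
      then show ?thesis unfolding Y_def using R0 by (simp add: mult_left_le)
    qed
    have bnd: "norm (\<chi> i. V *v (\<Sum>j\<in>{j. j \<le> i}. dP A Y i j H *\<^sub>R Y$j + masked_P A Y i j *\<^sub>R H$j))
       \<le> (\<theta> R * v * sqrt n) * norm H" for H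
    proof -
      define q where "q = n * (exp (- g * R\<^sup>2) * (2 * (2 * (a * norm H * R))))"
      have q: "\<bar>dP A Y i j H\<bar> \<le> q" if "j \<le> i" for i j
        unfolding q_def n_def
      proof (rule dP_bound)
        show "masked_P A Y i j * masked_P A Y i l \<le> exp (- g * R\<^sup>2)" if "l \<le> i" "l \<noteq> j" for l
          unfolding Y_def by (rule PP_bound[OF m gm]) (use that \<open>j \<le> i\<close> in auto)
        show "\<bar>dS A Y i l H\<bar> \<le> 2 * (a * norm H * R)" for l
          unfolding a_def by (rule dS_bound) (rule B)
      qed simp
      have "norm (\<chi> i. V *v (\<Sum>j\<in>{j. j \<le> i}. dP A Y i j H *\<^sub>R Y$j + masked_P A Y i j *\<^sub>R H$j))
         \<le> v * sqrt n * norm H + n * (v * (n * (q * R)))"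
        unfolding v_def n_def by (rule D_bound) (use q B in auto)
      also have "\<dots> = (\<theta> R * v * sqrt n) * norm H"
        unfolding \<theta>_def q_def K_def using sn0 by (simp add: field_simps power2_eq_square)
      finally show ?thesis .
    qed
    have fd: "frechet_derivative (masked_attention A V) (at Y) =
       (\<lambda>H. \<chi> i. V *v (\<Sum>j\<in>{j. j \<le> i}. dP A Y i j H *\<^sub>R Y$j + masked_P A Y i j *\<^sub>R H$j))"
      using frechet_derivative_at[OF D] by simp
    have "onorm (frechet_derivative (masked_attention A V) (at Y)) \<le> \<theta> R * v * sqrt n"
    proof (unfold fd, rule onorm_bound)
      show "0 \<le> \<theta> R * v * sqrt n" using th1[of R] v0 sn0
        by (intro mult_nonneg_nonneg) (auto intro: order_trans[OF zero_le_one])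
    qed (rule bnd)
    moreover have "masked_attention A V differentiable (at Y)" using D by (rule differentiableI)
    ultimately show ?thesis unfolding Y_def v_def n_def by simp
  qed
  show ?thesis
  proof (intro exI[of _ \<theta>] conjI allI impI)
    show "0 \<le> \<theta> R" for R using th1[of R] by linarith
    show "\<exists>C c. c > 0 \<and> (\<forall>\<^sub>F R in at_top. \<bar>\<theta> R - 1\<bar> \<le> C * exp (- c * R))"
      using ev by (intro exI[of _ "4 * K / sqrt n"] exI[of _ "1::real"]) simp
  qed (use main in auto)
qed


lemma cont_score: "continuous_on UNIV (\<lambda>X. attn_score A X i j)"
  by (rule has_derivative_continuous_on) (use D_score in blast)

lemma Z_negl_aux:
  fixes A :: "real^'d^'d"
  assumes A: "A \<noteq> 0" and jl: "j \<noteq> l" and li: "l \<noteq> i"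
  shows "negligible {X :: real^'d^'n. attn_score A X i j = attn_score A X i l}"
proof -
  obtain u where u: "A *v u \<noteq> 0" using A matrix_eq[of A 0] by auto
  define w where "w = A *v u"
  define b :: "real^'d^'n" where "b = axis i (w v* A)"
  have Gb: "(A *v X$i) \<bullet> w = b \<bullet> X" for X :: "real^'d^'n"
    unfolding b_def inner_axis' dot_lmul_matrix by (simp add: inner_commute)
  have b0: "b \<noteq> 0"
  proof
    assume "b = 0"
    then have "(A *v (axis i u :: real^'d^'n)$i) \<bullet> w = 0" using Gb[of "axis i u"] by simp
    then show False using u unfolding w_def by simp
  qed
  define G where "G X = (A *v X$i) \<bullet> w" for X :: "real^'d^'n"
  define Phi where "Phi X = attn_score A X i j - attn_score A X i l" for X :: "real^'d^'n"
  define S where "S k = {X. Phi X = 0 \<and> inverse (real (Suc k)) \<le> \<bar>G X\<bar>}" for k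
  define a :: "real^'d^'n" where "a = axis l (- w)"
  have Hn: "negligible {X. G X = 0}"
    unfolding G_def Gb using negligible_hyperplane[of b 0] b0 by simp
  have contG: "continuous_on UNIV G" unfolding G_def Gb by (intro continuous_intros)
  have contPhi: "continuous_on UNIV Phi" unfolding Phi_def by (intro continuous_intros cont_score)
  have Sn: "negligible (S k)" for k
  proof (rule starlike_negligible[of _ a])
    have "S k = {X. Phi X = 0} \<inter> {X. inverse (real (Suc k)) \<le> \<bar>G X\<bar>}" unfolding S_def by auto
    then show "closed (S k)"
      by (auto intro!: closed_Int closed_Collect_eq closed_Collect_le contPhi contG continuous_intros)
  next
    fix c and x :: "real^'d^'n"
    assume c1: "a + c *\<^sub>R x \<in> S k" and c0: "0 \<le> c" and x1: "a + x \<in> S k"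
    have ai: "a$i = 0" and aj: "a$j = 0" and al: "a$l = - w" unfolding a_def axis_def using jl li by auto
    define \<beta> where "\<beta> = (A *v x$i) \<bullet> (x$j - x$l)"
    have Gc: "G (a + t *\<^sub>R x) = t * G x" for t
      unfolding G_def by (simp add: ai matrix_vector_mult_scaleR)
    have Pc: "Phi (a + t *\<^sub>R x) = t * G x + t\<^sup>2 * \<beta>" for t
      unfolding Phi_def attn_score_def G_def \<beta>_def
      by (simp add: ai aj al matrix_vector_mult_scaleR inner_diff_right inner_add_right power2_eq_square algebra_simps)
    have pos: "0 < inverse (real (Suc k))" by simp
    have "c * G x \<noteq> 0" using c1 pos Gc[of c] unfolding S_def by auto
    then have cne: "c \<noteq> 0" and Gx: "G x \<noteq> 0" by auto
    have e1: "c * G x + c\<^sup>2 * \<beta> = 0" using c1 Pc[of c] unfolding S_def by auto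
    have e2: "G x + \<beta> = 0" using x1 Pc[of 1] unfolding S_def by auto
    from e1 cne have "G x + c * \<beta> = 0"
      by (metis (no_types, lifting) distrib_left mult_eq_0_iff power2_eq_square mult.assoc)
    moreover have "(c - 1) * \<beta> = (G x + c * \<beta>) - (G x + \<beta>)" by (simp add: algebra_simps)
    ultimately have "(c - 1) * \<beta> = 0" using e2 by simp
    moreover have "\<beta> \<noteq> 0" using e2 Gx by auto
    ultimately show "c = 1" by simp
  qed
  have "{X. attn_score A X i j = attn_score A X i l} \<subseteq> {X. G X = 0} \<union> (\<Union>k. S k)"
  proof
    fix X assume X: "X \<in> {X. attn_score A X i j = attn_score A X i l}"
    show "X \<in> {X. G X = 0} \<union> (\<Union>k. S k)"
    proof (cases "G X = 0")
      case False
      then obtain k where "inverse (real (Suc k)) < \<bar>G X\<bar>" using reals_Archimedean[of "\<bar>G X\<bar>"] by auto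
      then have "X \<in> S k" using X unfolding S_def Phi_def by auto
      then show ?thesis by blast
    qed simp
  qed
  moreover have "negligible ({X. G X = 0} \<union> (\<Union>k. S k))"
    using Hn negligible_Union_nat[OF Sn] by simp
  ultimately show ?thesis by (rule negligible_subset[rotated])
qed

lemma Z_negl:
  fixes A :: "real^'d^'d"
  assumes A: "A \<noteq> 0" and jl: "j \<noteq> l"
  shows "negligible {X :: real^'d^'n. attn_score A X i j = attn_score A X i l}"
proof (cases "l = i")
  case False then show ?thesis using Z_negl_aux[OF A jl] by blast
next
  case True
  then have "j \<noteq> i" using jl by simp
  then show ?thesis using Z_negl_aux[OF A jl[symmetric], of i] by (simp add: eq_commute)
qed

lemma part1:
  fixes A :: "real^'d^'d"
  assumes A: "A \<noteq> 0"
  shows "(unit_ball_seq - (E_masked A :: (real^'d^('n::{finite,linorder})) set)) \<in> null_sets lebesgue"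
proof -
  define Z where "Z = (\<lambda>(i,j,l). {X :: real^'d^('n::{finite,linorder}). attn_score A X i j = attn_score A X i l})"
  have sub: "unit_ball_seq - E_masked A \<subseteq> \<Union>(Z ` {(i,j,l). j \<noteq> l})"
  proof
    fix X :: "real^'d^('n::{finite,linorder})" assume X: "X \<in> unit_ball_seq - E_masked A"
    then have "\<not> (\<forall>i. \<exists>!j. j \<le> i \<and> (\<forall>l. l \<le> i \<longrightarrow> attn_score A X i l \<le> attn_score A X i j))"
      unfolding E_masked_def by blast
    then obtain i where ni: "\<not> (\<exists>!j. j \<le> i \<and> (\<forall>l. l \<le> i \<longrightarrow> attn_score A X i l \<le> attn_score A X i j))"
      by blast
    let ?s = "attn_score A X i"
    define M where "M = Max (?s ` {l. l \<le> i})"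
    have "M \<in> ?s ` {l. l \<le> i}" unfolding M_def by (rule Max_in) auto
    then obtain j0 where j0: "j0 \<le> i" "?s j0 = M" by auto
    have mx: "\<forall>l. l \<le> i \<longrightarrow> ?s l \<le> ?s j0" unfolding j0(2) M_def by (auto intro: Max_ge)
    obtain j1 where j1: "j1 \<le> i" "\<forall>l. l \<le> i \<longrightarrow> ?s l \<le> ?s j1" "j1 \<noteq> j0"
      using ni j0(1) mx by blast
    have "?s j0 = ?s j1" using mx j1 j0 by (meson order_antisym)
    then have "X \<in> Z (i, j0, j1)" unfolding Z_def by simp
    then show "X \<in> \<Union>(Z ` {(i,j,l). j \<noteq> l})" using j1(3) by blast
  qed
  have "negligible (\<Union>(Z ` {(i,j,l). j \<noteq> l}))"
    by (rule negligible_Union) (auto simp: Z_def intro!: Z_negl[OF A])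
  then have "negligible (unit_ball_seq - (E_masked A :: (real^'d^('n::{finite,linorder})) set))"
    using sub by (rule negligible_subset)
  then show ?thesis by (simp add: negligible_iff_null_sets)
qed

theorem mainTheorem12:
  fixes A :: "real^'d^'d" and V :: "real^'d^'k"
  assumes "A \<noteq> 0" and "V \<noteq> 0"
  shows "(unit_ball_seq - (E_masked A :: (real^'d^('n::{finite,linorder})) set)) \<in> null_sets lebesgue
    \<and> (\<forall>X \<in> (E_masked A :: (real^'d^('n::{finite,linorder})) set).
         \<exists>\<theta> :: real \<Rightarrow> real.
           (\<forall>R\<ge>0. \<theta> R \<ge> 0)
         \<and> (\<exists>C c. c > 0 \<and> (\<forall>\<^sub>F R in at_top. \<bar>\<theta> R - 1\<bar> \<le> C * exp (- c * R)))
         \<and> (\<forall>R\<ge>0. masked_attention A V differentiable (at (R *\<^sub>R X))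
               \<and> onorm (frechet_derivative (masked_attention A V) (at (R *\<^sub>R X)))
                   \<le> \<theta> R * spectral_norm V * sqrt (real CARD('n))))"
  using part1[OF assms(1)] part2[OF assms(2)] by blast

end
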